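(* Let $\mathbb X,\mathbb Y$ be Euclidean spaces, $\Phi\colon\mathbb X\rightrightarrows\mathbb Y$ a set-valued mapping whose graph is closed locally around $(\bar x,\bar y)\in\operatorname{gph}\Phi$, $u\in\mathbb S_{\mathbb X}$, and $\gamma\ge1$. If $\ker D^*_\gamma\Phi((\bar x,\bar y);(u,0))\subset\{0\}$, then $\Phi$ is metrically pseudo-subregular of order $\gamma$ at $(\bar x,\bar y)$ in direction $u$.
   Context: Pseudo-coderivative of order $\gamma$: $x^*\in D^*_\gamma\Phi((\bar x,\bar y);(u,v))(y^* )$ iff there are $u_k\to u$, $v_k\to v$, $t_k\downarrow0$, $x_k^*\to x^*$, $y_k^*\to y^*$ with $(x_k^*,-y_k^*/(t_k\|u_k\|)^{\gamma-1})\in\widehat{\mathcal N}_{\operatorname{gph}\Phi}(\bar x+t_ku_k,\bar y+(t_k\|u_k\|)^\gamma v_k)$ for all $k$ ($\widehat{\mathcal N}$ the regular normal cone); $\ker\Psi=\{y^*\mid 0\in\Psi(y^* )\}$. Metric pseudo-subregularity of order $\gamma$ in direction $u$: there are $\varepsilon,\delta,\kappa>0$ with $\|x-\bar x\|^{\gamma-1}\operatorname{dist}(x,\Phi^{-1}(\bar y))\le\kappa\operatorname{dist}(\bar y,\Phi(x))$ for all $x\in\bar x+\mathbb B_{\varepsilon,\delta}(u)$, where $\mathbb B_{\varepsilon,\delta}(u)=\{w\mid\|\|w\|u-\|u\|w\|\le\delta\|u\|\|w\|,\ \|w\|\le\varepsilon\}$. *)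

theory Defs
  imports "HOL-Analysis.Analysis"
begin

definition gph :: "('a \<Rightarrow> 'b set) \<Rightarrow> ('a \<times> 'b) set" where
  "gph Phi = {(x, y). y \<in> Phi x}"

definition inv_img :: "('a \<Rightarrow> 'b set) \<Rightarrow> 'b \<Rightarrow> 'a set" where
  "inv_img Phi y = {x. y \<in> Phi x}"

definition regular_normal_cone :: "'a::real_inner set \<Rightarrow> 'a \<Rightarrow> 'a set" where
  "regular_normal_cone \<Omega> z =
     {zs. z \<in> \<Omega> \<and> (\<forall>\<epsilon>>0. \<exists>\<delta>>0. \<forall>z'\<in>\<Omega>. norm (z' - z) < \<delta> \<longrightarrow>
              inner zs (z' - z) \<le> \<epsilon> * norm (z' - z))}"

definition pseudo_coderivative ::
  "real \<Rightarrow> ('a::euclidean_space \<Rightarrow> 'b::euclidean_space set) \<Rightarrow> 'a \<Rightarrow> 'b \<Rightarrow> 'a \<Rightarrow> 'b \<Rightarrow> 'b \<Rightarrow> 'a set" where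
  "pseudo_coderivative \<gamma> Phi xb yb u v ys =
     {xs. \<exists>(uk::nat \<Rightarrow> 'a) (vk::nat \<Rightarrow> 'b) (tk::nat \<Rightarrow> real) (xsk::nat \<Rightarrow> 'a) (ysk::nat \<Rightarrow> 'b).
        uk \<longlonglongrightarrow> u \<and> vk \<longlonglongrightarrow> v \<and> (\<forall>k. tk k > 0) \<and> tk \<longlonglongrightarrow> 0 \<and>
        xsk \<longlonglongrightarrow> xs \<and> ysk \<longlonglongrightarrow> ys \<and>
        (\<forall>k. (xsk k, - ((1 / (tk k * norm (uk k)) powr (\<gamma> - 1)) *\<^sub>R ysk k))
              \<in> regular_normal_cone (gph Phi)
                   (xb + tk k *\<^sub>R uk k, yb + ((tk k * norm (uk k)) powr \<gamma>) *\<^sub>R vk k))}"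

definition ker_sv :: "('b \<Rightarrow> 'a::zero set) \<Rightarrow> 'b set" where
  "ker_sv Psi = {ys. 0 \<in> Psi ys}"

definition dir_nbhd :: "real \<Rightarrow> real \<Rightarrow> 'a::real_normed_vector \<Rightarrow> 'a set" where
  "dir_nbhd \<epsilon> \<delta> u =
     {w. norm (norm w *\<^sub>R u - norm u *\<^sub>R w) \<le> \<delta> * norm u * norm w \<and> norm w \<le> \<epsilon>}"

(* Metric pseudo-subregularity of order gamma at (xb,yb) in direction u.
   dist(yb, Phi x) = +infinity when Phi x = {}, so the inequality is only
   required when Phi x is nonempty (infdist to {} is 0 in Isabelle). *)
definition metrically_pseudo_subregular ::
  "real \<Rightarrow> ('a::euclidean_space \<Rightarrow> 'b::euclidean_space set) \<Rightarrow> 'a \<Rightarrow> 'b \<Rightarrow> 'a \<Rightarrow> bool" where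
  "metrically_pseudo_subregular \<gamma> Phi xb yb u \<longleftrightarrow>
     (\<exists>\<epsilon>>0. \<exists>\<delta>>0. \<exists>\<kappa>>0. \<forall>x \<in> (\<lambda>w. xb + w) ` dir_nbhd \<epsilon> \<delta> u.
        Phi x \<noteq> {} \<longrightarrow>
        norm (x - xb) powr (\<gamma> - 1) * infdist x (inv_img Phi yb) \<le> \<kappa> * infdist yb (Phi x))"

end

theory Submission
  imports Defs
begin

lemma normal_of_min:
  fixes g :: "'c::real_inner \<Rightarrow> real"
  assumes d: "(g has_derivative (\<lambda>h. inner n h)) (at z0)" and "z0 \<in> \<Omega>" "open U" "z0 \<in> U"
    and mn: "\<forall>z\<in>\<Omega>\<inter>U. g z0 \<le> g z"
  shows "-n \<in> regular_normal_cone \<Omega> z0"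
  unfolding regular_normal_cone_def
proof (safe)
  show "z0 \<in> \<Omega>" by fact
  fix e :: real assume e: "e > 0"
  obtain d1 where d1: "d1 > 0" "\<forall>y. norm(y - z0) < d1 \<longrightarrow> norm (g y - g z0 - inner n (y - z0)) \<le> e * norm (y - z0)"
    using d e unfolding has_derivative_at_alt by blast
  obtain d2 where d2: "d2 > 0" "ball z0 d2 \<subseteq> U" using assms(3,4) open_contains_ball by blast
  show "\<exists>\<delta>>0. \<forall>z'\<in>\<Omega>. norm (z' - z0) < \<delta> \<longrightarrow> inner (- n) (z' - z0) \<le> e * norm (z' - z0)"
  proof (intro exI[of _ "min d1 d2"] conjI ballI impI)
    show "min d1 d2 > 0" using d1 d2 by simp
    fix z assume z: "z \<in> \<Omega>" "norm (z - z0) < min d1 d2"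
    then have "z \<in> U" using d2 by (auto simp: dist_norm norm_minus_commute)
    then have "g z0 \<le> g z" using mn z by blast
    moreover have "norm (g z - g z0 - inner n (z - z0)) \<le> e * norm (z - z0)" using d1 z by auto
    ultimately show "inner (- n) (z - z0) \<le> e * norm (z - z0)" by auto
  qed
qed

lemma normal_cone_scale:
  assumes "n \<in> regular_normal_cone \<Omega> z0" "l > 0"
  shows "l *\<^sub>R n \<in> regular_normal_cone \<Omega> z0"
  unfolding regular_normal_cone_def
proof (safe)
  show "z0 \<in> \<Omega>" using assms(1) unfolding regular_normal_cone_def by blast
  fix e :: real assume e: "e > 0"
  then have "e / l > 0" using assms by simp
  then obtain d where d: "d > 0" "\<forall>z'\<in>\<Omega>. norm (z' - z0) < d \<longrightarrow> inner n (z' - z0) \<le> (e/l) * norm (z' - z0)"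
    using assms(1) unfolding regular_normal_cone_def by blast
  show "\<exists>\<delta>>0. \<forall>z'\<in>\<Omega>. norm (z' - z0) < \<delta> \<longrightarrow> inner (l *\<^sub>R n) (z' - z0) \<le> e * norm (z' - z0)"
  proof (intro exI[of _ d] conjI ballI impI)
    fix z assume z: "z \<in> \<Omega>" "norm (z - z0) < d"
    then have "inner n (z - z0) \<le> (e/l) * norm (z - z0)" using d by blast
    then show "inner (l *\<^sub>R n) (z - z0) \<le> e * norm (z - z0)" using assms(2) by (simp add: pos_le_divide_eq mult.commute)
  qed (fact d)
qed

lemma g_deriv:
  fixes x x' :: "'a::euclidean_space" and y' yb :: "'b::euclidean_space"
  assumes "y' \<noteq> yb"
  shows "((\<lambda>p. norm (snd p - yb) + \<beta> * inner (fst p - x) (fst p - x)) has_derivative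
          (\<lambda>h. inner ((2*\<beta>) *\<^sub>R (x' - x), sgn (y' - yb)) h)) (at (x', y'))"
proof -
  have nd: "(norm has_derivative (\<lambda>h. inner h (sgn (y' - yb)))) (at (snd (x',y') - yb))"
    using has_derivative_norm[of "y' - yb"] assms by simp
  have sd: "((\<lambda>p. snd p - yb) has_derivative (\<lambda>h. snd h)) (at (x', y'))"
    using has_derivative_diff[OF has_derivative_snd[OF has_derivative_ident] has_derivative_const] by simp
  have n: "((\<lambda>p. norm (snd p - yb)) has_derivative (\<lambda>h. inner (sgn (y' - yb)) (snd h))) (at (x', y'))"
    using has_derivative_compose[OF sd nd] by (simp add: inner_commute)
  have i: "((\<lambda>p. \<beta> * inner (fst p - x) (fst p - x)) has_derivative (\<lambda>h. inner ((2*\<beta>) *\<^sub>R (x' - x)) (fst h))) (at (x', y'))"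
    by (rule derivative_eq_intros refl | simp add: inner_commute algebra_simps)+
  have e: "(\<lambda>h. inner (sgn (y' - yb)) (snd h) + inner ((2*\<beta>) *\<^sub>R (x' - x)) (fst h)) =
     (\<lambda>h. inner ((2*\<beta>) *\<^sub>R (x' - x), sgn (y' - yb)) h)"
    by (rule ext, metis add.commute inner_Pair prod.collapse)
  show ?thesis using has_derivative_add[OF n i] unfolding e .
qed


lemma infdist_lessE:
  assumes "A \<noteq> {}" "infdist x A < e"
  obtains a where "a \<in> A" "dist x a < e"
proof -
  have "bdd_below ((\<lambda>a. dist x a) ` A)" by (rule bdd_belowI[of _ 0]) auto
  then show ?thesis using assms that infdist_notempty[OF assms(1), of x] cINF_less_iff by metis
qed

lemma core:
  fixes Phi :: "'a::euclidean_space \<Rightarrow> 'b::euclidean_space set"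
  assumes r: "r > 0" "closed (gph Phi \<inter> cball (xb, yb) r)"
    and u: "norm u = 1" and ga: "\<gamma> \<ge> 1"
    and ka: "\<kappa> \<ge> 4" and ep: "3 * \<epsilon> \<le> r" "\<epsilon> \<le> 1" and de: "\<delta> > 0"
    and xin: "x \<in> (\<lambda>w. xb + w) ` dir_nbhd \<epsilon> \<delta> u"
    and ne: "Phi x \<noteq> {}"
    and viol: "\<not> (norm (x - xb) powr (\<gamma> - 1) * infdist x (inv_img Phi yb) \<le> \<kappa> * infdist yb (Phi x))"
    and g0: "(xb, yb) \<in> gph Phi"
  shows "\<exists>u' v' t xs ys. t > 0 \<and> t \<le> \<epsilon> \<and> norm (u' - u) \<le> \<delta> + 1 / sqrt \<kappa> \<and>
     norm v' \<le> 2 powr \<gamma> / \<kappa> \<and> norm xs \<le> 2 * 2 powr (\<gamma> - 1) / sqrt \<kappa> \<and> norm ys = 1 \<and>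
     (xs, - ((1 / (t * norm u')) powr (\<gamma> - 1)) *\<^sub>R ys) \<in> regular_normal_cone (gph Phi)
        (xb + t *\<^sub>R u', yb + ((t * norm u') powr \<gamma>) *\<^sub>R v')"
proof -
  obtain w where w: "x = xb + w" "w \<in> dir_nbhd \<epsilon> \<delta> u" using xin by blast
  define \<tau> where "\<tau> = norm w"
  have xw: "x - xb = w" using w by simp
  have wd: "norm (\<tau> *\<^sub>R u - w) \<le> \<delta> * \<tau>" "\<tau> \<le> \<epsilon>"
    using w(2) u unfolding dir_nbhd_def \<tau>_def by auto
  define \<rho> where "\<rho> = infdist x (inv_img Phi yb)"
  define P where "P = \<tau> powr (\<gamma> - 1)"
  have xbinv: "xb \<in> inv_img Phi yb" using g0 by (simp add: inv_img_def gph_def)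
  have viol2: "\<kappa> * infdist yb (Phi x) < P * \<rho>" using viol xw unfolding P_def \<rho>_def \<tau>_def by simp
  have rho0: "\<rho> \<ge> 0" unfolding \<rho>_def by (rule infdist_nonneg)
  have "0 \<le> \<kappa> * infdist yb (Phi x)" using ka infdist_nonneg[of yb "Phi x"] by simp
  then have Prho: "P * \<rho> > 0" using viol2 by linarith
  have P0: "P \<ge> 0" unfolding P_def by simp
  have rhopos: "\<rho> > 0" using Prho P0 rho0 by (metis linorder_not_le mult_zero_right order.antisym)
  have Ppos: "P > 0" using Prho rho0 P0 by (metis linorder_not_le mult_zero_left order.antisym)
  have taupos: "\<tau> > 0" using Ppos unfolding P_def \<tau>_def by (metis norm_ge_zero order_less_le powr_zero_eq_one zero_less_one powr_0 less_irrefl)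
  have rhotau: "\<rho> \<le> \<tau>" unfolding \<rho>_def \<tau>_def using infdist_le[OF xbinv, of x] w by (simp add: dist_norm)
  have P1: "P \<le> 1" unfolding P_def using ga wd(2) ep(2) taupos by (intro powr_le1) auto
  have Ptau: "P * \<tau> = \<tau> powr \<gamma>" unfolding P_def using taupos powr_add[of \<tau> "\<gamma> - 1" 1] by simp
  have "infdist yb (Phi x) < P * \<rho> / \<kappa>" using viol2 ka by (simp add: field_simps)
  then obtain y where y: "y \<in> Phi x" "dist yb y < P * \<rho> / \<kappa>" using infdist_lessE[OF ne] by blast
  define e where "e = norm (y - yb)"
  have ke: "\<kappa> * e < P * \<rho>" using y(2) ka unfolding e_def by (simp add: dist_norm norm_minus_commute field_simps)
  have "y \<noteq> yb"
  proof
    assume "y = yb"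
    then have "x \<in> inv_img Phi yb" using y by (simp add: inv_img_def)
    then show False using rhopos unfolding \<rho>_def by simp
  qed
  then have epos: "e > 0" unfolding e_def by simp
  have "P * \<rho> \<le> \<rho>" using P1 rhopos by (simp add: mult_left_le_one_le)
  then have ker: "\<kappa> * e < \<rho>" using ke by linarith
  have "4 * e \<le> \<kappa> * e" using ka epos by simp
  then have erho: "4 * e < \<rho>" using ker by linarith
  define \<beta> where "\<beta> = \<kappa> * e / \<rho>\<^sup>2"
  have betapos: "\<beta> > 0" unfolding \<beta>_def using ka epos rhopos by simp
  define S where "S = gph Phi \<inter> (cball x \<rho> \<times> cball yb (2 * e))"
  have box: "cball x \<rho> \<times> cball yb (2 * e) \<subseteq> cball (xb, yb) r"
  proof (clarsimp)
    fix a b assume ab: "dist x a \<le> \<rho>" "dist yb b \<le> 2 * e"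
    have "dist (xb, yb) (a, b) = norm (a - xb, b - yb)" by (simp add: dist_norm norm_Pair norm_minus_commute)
    also have "\<dots> \<le> norm (a - xb) + norm (b - yb)" by (rule norm_Pair_le)
    also have "norm (a - xb) \<le> norm (a - x) + norm (x - xb)" using norm_triangle_ineq[of "a - x" "x - xb"] by simp
    finally have "dist (xb, yb) (a, b) \<le> norm (a - x) + norm (x - xb) + norm (b - yb)" by simp
    moreover have "norm (a - x) \<le> \<rho>" "norm (b - yb) \<le> 2 * e" using ab by (auto simp: dist_norm norm_minus_commute)
    moreover have "norm (x - xb) = \<tau>" using xw \<tau>_def by simp
    ultimately show "dist (xb, yb) (a, b) \<le> r" using erho rhotau wd(2) ep(1) epos by linarith
  qed
  have Seq: "S = (gph Phi \<inter> cball (xb, yb) r) \<inter> (cball x \<rho> \<times> cball yb (2 * e))"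
    unfolding S_def using box by blast
  have Scomp: "compact S" unfolding Seq
    by (rule closed_Int_compact[OF r(2)]) (intro compact_Times compact_cball)
  have xyS: "(x, y) \<in> S" unfolding S_def gph_def using y rhopos epos by (simp add: e_def dist_norm norm_minus_commute)
  define g where "g = (\<lambda>p::'a \<times> 'b. norm (snd p - yb) + \<beta> * inner (fst p - x) (fst p - x))"
  have gc: "continuous_on S g" unfolding g_def by (intro continuous_intros)
  obtain p where pS: "p \<in> S" and pmin: "\<forall>q\<in>S. g p \<le> g q"
    using continuous_attains_inf[OF Scomp _ gc] xyS by blast
  obtain x' y' where p: "p = (x', y')" by (cases p)
  have "g p \<le> g (x, y)" using pmin xyS by blast
  then have gpe: "norm (y' - yb) + \<beta> * (norm (x' - x))\<^sup>2 \<le> e"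
    unfolding g_def p by (simp add: e_def power2_norm_eq_inner)
  define d where "d = norm (x' - x)"
  have d0: "d \<ge> 0" unfolding d_def by simp
  have "\<beta> * (norm (x' - x))\<^sup>2 \<ge> 0" using betapos by simp
  then have y'e: "norm (y' - yb) \<le> e" using gpe by linarith
  have bd: "\<beta> * d\<^sup>2 \<le> e" using gpe norm_ge_zero[of "y' - yb"] unfolding d_def by linarith
  have d2: "d\<^sup>2 \<le> \<rho>\<^sup>2 / \<kappa>"
  proof -
    have "\<beta> * d\<^sup>2 \<le> e" by (fact bd)
    then have "(\<kappa> * e / \<rho>\<^sup>2) * d\<^sup>2 \<le> e" unfolding \<beta>_def .
    then have "\<kappa> * e * d\<^sup>2 \<le> e * \<rho>\<^sup>2" using rhopos by (simp add: field_simps)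
    then have "\<kappa> * d\<^sup>2 \<le> \<rho>\<^sup>2" using epos by (simp add: mult.assoc mult.left_commute[of e])
    then show ?thesis using ka by (simp add: field_simps)
  qed
  have "\<rho>\<^sup>2 / \<kappa> \<le> \<rho>\<^sup>2 / 4" using ka by (intro divide_left_mono) auto
  then have "d\<^sup>2 \<le> \<rho>\<^sup>2 / 4" using d2 by linarith
  then have "d\<^sup>2 \<le> (\<rho>/2)\<^sup>2" by (simp add: power_divide)
  then have drho: "d \<le> \<rho> / 2" using rhopos power2_le_imp_le[of d "\<rho>/2"] by linarith
  have "y' \<noteq> yb"
  proof
    assume "y' = yb"
    then have "x' \<in> inv_img Phi yb" using pS p unfolding S_def gph_def inv_img_def by auto
    then have "infdist x (inv_img Phi yb) \<le> dist x x'" by (rule infdist_le)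
    then have "\<rho> \<le> d" unfolding \<rho>_def d_def by (simp add: dist_norm norm_minus_commute)
    then show False using drho rhopos by linarith
  qed
  then have y'ne: "y' - yb \<noteq> 0" by simp
  define U where "U = ball x \<rho> \<times> ball yb (2 * e)"
  have Uo: "open U" unfolding U_def by (intro open_Times open_ball)
  have "norm (x' - x) < \<rho>" using drho rhopos unfolding d_def by linarith
  moreover have "norm (y' - yb) < 2 * e" using y'e epos by linarith
  ultimately have pU: "p \<in> U" unfolding U_def p mem_Times_iff by (simp add: dist_norm norm_minus_commute)
  have minU: "\<forall>z\<in>gph Phi \<inter> U. g (x', y') \<le> g z"
  proof
    fix z assume "z \<in> gph Phi \<inter> U"
    then have "z \<in> S" unfolding S_def U_def by (auto simp: mem_Times_iff)
    then show "g (x', y') \<le> g z" using pmin p by blast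
  qed
  have gd: "(g has_derivative (\<lambda>h. inner ((2*\<beta>) *\<^sub>R (x' - x), sgn (y' - yb)) h)) (at (x', y'))"
    unfolding g_def by (rule g_deriv) fact
  have pg: "(x', y') \<in> gph Phi" using pS p unfolding S_def by blast
  have nc: "- ((2*\<beta>) *\<^sub>R (x' - x), sgn (y' - yb)) \<in> regular_normal_cone (gph Phi) (x', y')"
    by (rule normal_of_min[OF gd pg Uo pU[unfolded p] minU])
  define s where "s = norm (x' - xb)"
  have "w = (x' - xb) - (x' - x)" using xw by (simp add: algebra_simps)
  then have "\<tau> \<le> s + d" unfolding s_def d_def \<tau>_def using norm_triangle_ineq4[of "x' - xb" "x' - x"] by simp
  then have stau: "\<tau> / 2 \<le> s" using drho rhotau by linarith
  then have spos: "s > 0" using taupos by linarith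
  have ts2: "\<tau> / s \<le> 2" using stau spos by (simp add: divide_le_eq)
  define lam where "lam = (1 / s) powr (\<gamma> - 1)"
  have lpos: "lam > 0" unfolding lam_def using spos by simp
  have nc2: "lam *\<^sub>R (- ((2*\<beta>) *\<^sub>R (x' - x), sgn (y' - yb))) \<in> regular_normal_cone (gph Phi) (x', y')"
    by (rule normal_cone_scale[OF nc lpos])
  define u' where "u' = (1 / \<tau>) *\<^sub>R (x' - xb)"
  define v' where "v' = (1 / s powr \<gamma>) *\<^sub>R (y' - yb)"
  define xs where "xs = lam *\<^sub>R ((2*\<beta>) *\<^sub>R (x - x'))"
  define ys where "ys = sgn (y' - yb)"
  have tu: "\<tau> * norm u' = s" unfolding u'_def s_def using taupos by simp
  have pt1: "xb + \<tau> *\<^sub>R u' = x'" unfolding u'_def using taupos by simp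
  have pt2: "yb + (s powr \<gamma>) *\<^sub>R v' = y'" unfolding v'_def using spos by simp
  have eqn: "(xs, - ((1 / (\<tau> * norm u')) powr (\<gamma> - 1)) *\<^sub>R ys) = lam *\<^sub>R (- ((2*\<beta>) *\<^sub>R (x' - x), sgn (y' - yb)))"
    unfolding tu xs_def ys_def lam_def by (simp add: algebra_simps)
  have memb: "(xs, - ((1 / (\<tau> * norm u')) powr (\<gamma> - 1)) *\<^sub>R ys) \<in> regular_normal_cone (gph Phi)
        (xb + \<tau> *\<^sub>R u', yb + ((\<tau> * norm u') powr \<gamma>) *\<^sub>R v')"
    unfolding eqn pt1 using nc2 unfolding tu pt2 .
  have ys1: "norm ys = 1" unfolding ys_def using y'ne by (simp add: norm_sgn)
  have ks: "sqrt \<kappa> > 0" using ka by simp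
  have sk2: "(sqrt \<kappa>)\<^sup>2 = \<kappa>" using ka by simp
  have "d\<^sup>2 \<le> (\<tau> / sqrt \<kappa>)\<^sup>2"
  proof -
    have "\<rho>\<^sup>2 \<le> \<tau>\<^sup>2" using rhotau rho0 by (simp add: power_mono)
    then have "\<rho>\<^sup>2 / \<kappa> \<le> \<tau>\<^sup>2 / \<kappa>" using ka by (simp add: divide_right_mono)
    then show ?thesis using d2 sk2 by (simp add: power_divide)
  qed
  then have dt: "d \<le> \<tau> / sqrt \<kappa>" using power2_le_imp_le[of d "\<tau> / sqrt \<kappa>"] taupos ks by simp
  have "u' - u = ((1 / \<tau>) *\<^sub>R w - u) + (1 / \<tau>) *\<^sub>R (x' - x)"
    unfolding u'_def w(1) by (simp add: algebra_simps)
  then have "norm (u' - u) \<le> norm ((1 / \<tau>) *\<^sub>R w - u) + norm ((1 / \<tau>) *\<^sub>R (x' - x))"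
    by (metis norm_triangle_ineq)
  moreover have "norm ((1 / \<tau>) *\<^sub>R w - u) \<le> \<delta>"
  proof -
    have "(1 / \<tau>) *\<^sub>R w - u = (1 / \<tau>) *\<^sub>R (- (\<tau> *\<^sub>R u - w))" using taupos by (simp add: algebra_simps)
    then have "norm ((1 / \<tau>) *\<^sub>R w - u) = norm (\<tau> *\<^sub>R u - w) / \<tau>" using taupos by (simp add: norm_minus_commute)
    also have "\<dots> \<le> \<delta>" using wd(1) taupos by (simp add: divide_le_eq)
    finally show ?thesis .
  qed
  moreover have "norm ((1 / \<tau>) *\<^sub>R (x' - x)) \<le> 1 / sqrt \<kappa>"
  proof -
    have "norm ((1 / \<tau>) *\<^sub>R (x' - x)) = d / \<tau>" unfolding d_def using taupos by simp
    also have "\<dots> \<le> 1 / sqrt \<kappa>" using dt taupos ks by (simp add: divide_le_eq field_simps)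
    finally show ?thesis .
  qed
  ultimately have ub: "norm (u' - u) \<le> \<delta> + 1 / sqrt \<kappa>" by linarith
  have "P * \<rho> \<le> P * \<tau>" using rhotau Ppos by simp
  then have ket: "\<kappa> * e \<le> \<tau> powr \<gamma>" using ke Ptau by linarith
  have sg: "s powr \<gamma> > 0" using spos by simp
  have "norm v' = norm (y' - yb) / s powr \<gamma>" unfolding v'_def using sg by simp
  also have "\<dots> \<le> e / s powr \<gamma>" using y'e sg by (simp add: divide_right_mono)
  also have "\<dots> \<le> (\<tau> powr \<gamma> / \<kappa>) / s powr \<gamma>" using ket ka sg by (intro divide_right_mono) (simp_all add: field_simps)
  also have "\<dots> = (\<tau> / s) powr \<gamma> / \<kappa>" using taupos spos by (simp add: powr_divide)
  also have "\<dots> \<le> 2 powr \<gamma> / \<kappa>" using ts2 taupos spos ga ka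
    by (intro divide_right_mono powr_mono2) auto
  finally have vb: "norm v' \<le> 2 powr \<gamma> / \<kappa>" .
  have "(\<beta> * d)\<^sup>2 \<le> (P / sqrt \<kappa>)\<^sup>2"
  proof -
    have "(\<beta> * d)\<^sup>2 = \<beta> * (\<beta> * d\<^sup>2)" by (simp add: power2_eq_square)
    also have "\<dots> \<le> \<beta> * e" using bd betapos by simp
    also have "\<dots> = \<kappa> * e\<^sup>2 / \<rho>\<^sup>2" unfolding \<beta>_def by (simp add: power2_eq_square)
    also have "\<dots> \<le> (P / sqrt \<kappa>)\<^sup>2"
    proof -
      have "(\<kappa> * e)\<^sup>2 \<le> (P * \<rho>)\<^sup>2" using ke epos ka by (intro power_mono) auto
      then have "\<kappa> * (\<kappa> * e\<^sup>2) \<le> P\<^sup>2 * \<rho>\<^sup>2" by (simp add: power2_eq_square mult_ac)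
      then show ?thesis using ka rhopos sk2 by (simp add: power_divide field_simps)
    qed
    finally show ?thesis .
  qed
  then have bdP: "\<beta> * d \<le> P / sqrt \<kappa>" using power2_le_imp_le[of "\<beta> * d" "P / sqrt \<kappa>"] Ppos ks by simp
  have lP: "lam * P \<le> 2 powr (\<gamma> - 1)"
  proof -
    have "lam * P = (\<tau> / s) powr (\<gamma> - 1)" unfolding lam_def P_def using taupos spos
      by (simp add: powr_divide)
    also have "\<dots> \<le> 2 powr (\<gamma> - 1)" using ts2 taupos spos ga by (intro powr_mono2) auto
    finally show ?thesis .
  qed
  have "norm xs = lam * (2 * \<beta> * d)" unfolding xs_def d_def using lpos betapos
    by (simp add: norm_minus_commute)
  also have "\<dots> \<le> lam * (2 * (P / sqrt \<kappa>))" using mult_left_mono[of "2 * \<beta> * d" "2 * (P / sqrt \<kappa>)" lam] bdP lpos by linarith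
  also have "\<dots> = 2 * (lam * P) / sqrt \<kappa>" by simp
  also have "\<dots> \<le> 2 * 2 powr (\<gamma> - 1) / sqrt \<kappa>" using lP ks by (simp add: divide_right_mono)
  finally have xb: "norm xs \<le> 2 * 2 powr (\<gamma> - 1) / sqrt \<kappa>" .
  show ?thesis
    by (rule exI[of _ u'], rule exI[of _ v'], rule exI[of _ \<tau>], rule exI[of _ xs], rule exI[of _ ys])
      (use taupos wd(2) ub vb xb ys1 memb in auto)
qed


lemma aux_bounds:
  "1 / (real k + 4) \<le> inverse (real (Suc k))"
  "1 / sqrt (real k + 4) \<le> sqrt (inverse (real (Suc k)))"
proof -
  show a: "1 / (real k + 4) \<le> inverse (real (Suc k))" by (simp add: field_simps)
  have "1 / sqrt (real k + 4) = sqrt (1 / (real k + 4))" by (simp add: real_sqrt_divide)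
  also have "\<dots> \<le> sqrt (inverse (real (Suc k)))" using a by (rule real_sqrt_le_mono)
  finally show "1 / sqrt (real k + 4) \<le> sqrt (inverse (real (Suc k)))" .
qed

theorem lemma2p16:
  fixes Phi :: "'a::euclidean_space \<Rightarrow> 'b::euclidean_space set"
    and xb :: 'a and yb :: 'b and u :: 'a and \<gamma> :: real
  assumes "(xb, yb) \<in> gph Phi"
    and "\<exists>r>0. closed (gph Phi \<inter> cball (xb, yb) r)"
    and "norm u = 1"
    and "\<gamma> \<ge> 1"
    and "ker_sv (pseudo_coderivative \<gamma> Phi xb yb u 0) \<subseteq> {0}"
  shows "metrically_pseudo_subregular \<gamma> Phi xb yb u"
proof (rule ccontr)
  assume nm: "\<not> metrically_pseudo_subregular \<gamma> Phi xb yb u"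
  obtain r where r: "r > 0" "closed (gph Phi \<inter> cball (xb, yb) r)" using assms(2) by blast
  define c where "c = min 1 (r / 3)"
  have cpos: "c > 0" unfolding c_def using r by simp
  define a where "a = (\<lambda>k::nat. inverse (real (Suc k)))"
  have apos: "a k > 0" for k unfolding a_def by simp
  have a1: "a k \<le> 1" for k unfolding a_def by (simp add: field_simps)
  have "\<exists>U V T XS YS. T > 0 \<and> T \<le> c * a k \<and> norm (U - u) \<le> a k + 1 / sqrt (real k + 4) \<and>
     norm V \<le> 2 powr \<gamma> / (real k + 4) \<and> norm XS \<le> 2 * 2 powr (\<gamma> - 1) / sqrt (real k + 4) \<and> norm YS = 1 \<and>
     (XS, - ((1 / (T * norm U)) powr (\<gamma> - 1)) *\<^sub>R YS) \<in> regular_normal_cone (gph Phi)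
        (xb + T *\<^sub>R U, yb + ((T * norm U) powr \<gamma>) *\<^sub>R V)" for k
  proof -
    have ep: "c * a k > 0" using cpos apos by simp
    have "\<exists>x \<in> (\<lambda>w. xb + w) ` dir_nbhd (c * a k) (a k) u. Phi x \<noteq> {} \<and>
        \<not> (norm (x - xb) powr (\<gamma> - 1) * infdist x (inv_img Phi yb) \<le> (real k + 4) * infdist yb (Phi x))"
      using nm ep apos[of k] unfolding metrically_pseudo_subregular_def
      by (smt (verit, best) of_nat_0_le_iff)
    then obtain x where x: "x \<in> (\<lambda>w. xb + w) ` dir_nbhd (c * a k) (a k) u" "Phi x \<noteq> {}"
      "\<not> (norm (x - xb) powr (\<gamma> - 1) * infdist x (inv_img Phi yb) \<le> (real k + 4) * infdist yb (Phi x))"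
      by blast
    have "3 * (c * a k) \<le> r"
    proof -
      have "c * a k \<le> c" using a1[of k] cpos by (simp add: mult_left_le)
      moreover have "c \<le> r / 3" unfolding c_def by simp
      ultimately show ?thesis by linarith
    qed
    moreover have "c * a k \<le> 1"
    proof -
      have "c * a k \<le> c" using a1[of k] cpos by (simp add: mult_left_le)
      moreover have "c \<le> 1" unfolding c_def by simp
      ultimately show ?thesis by linarith
    qed
    ultimately show ?thesis
      using core[where \<kappa>="real k + 4", OF r assms(3) assms(4) _ _ _ apos[of k] x assms(1)] by simp
  qed
  then obtain U V T XS YS where UV: "\<And>k. T k > 0 \<and> T k \<le> c * a k \<and> norm (U k - u) \<le> a k + 1 / sqrt (real k + 4) \<and>
     norm (V k) \<le> 2 powr \<gamma> / (real k + 4) \<and> norm (XS k) \<le> 2 * 2 powr (\<gamma> - 1) / sqrt (real k + 4) \<and> norm (YS k) = 1 \<and>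
     (XS k, - ((1 / (T k * norm (U k))) powr (\<gamma> - 1)) *\<^sub>R YS k) \<in> regular_normal_cone (gph Phi)
        (xb + T k *\<^sub>R U k, yb + ((T k * norm (U k)) powr \<gamma>) *\<^sub>R V k)"
    by metis
  have a0: "a \<longlonglongrightarrow> 0" unfolding a_def by (rule LIMSEQ_inverse_real_of_nat)
  have b0: "(\<lambda>k. sqrt (a k)) \<longlonglongrightarrow> 0" using tendsto_real_sqrt[OF a0] by simp
  have T0: "T \<longlonglongrightarrow> 0"
  proof (rule Lim_null_comparison)
    show "\<forall>\<^sub>F k in sequentially. norm (T k) \<le> c * a k" using UV by (simp add: less_imp_le)
    show "(\<lambda>k. c * a k) \<longlonglongrightarrow> 0" using tendsto_mult_right_zero[OF a0] by simp
  qed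
  have Uu: "U \<longlonglongrightarrow> u"
  proof (rule LIM_zero_cancel, rule Lim_null_comparison)
    show "\<forall>\<^sub>F k in sequentially. norm (U k - u) \<le> a k + sqrt (a k)"
      using UV aux_bounds(2) unfolding a_def by (smt (verit) always_eventually)
    show "(\<lambda>k. a k + sqrt (a k)) \<longlonglongrightarrow> 0" using tendsto_add[OF a0 b0] by simp
  qed
  have V0: "V \<longlonglongrightarrow> 0"
  proof (rule Lim_null_comparison)
    show "\<forall>\<^sub>F k in sequentially. norm (V k) \<le> 2 powr \<gamma> * a k"
    proof (rule always_eventually, rule allI)
      fix k
      have "2 powr \<gamma> / (real k + 4) = 2 powr \<gamma> * (1 / (real k + 4))" by simp
      also have "\<dots> \<le> 2 powr \<gamma> * a k" using aux_bounds(1)[of k] unfolding a_def by (intro mult_left_mono) auto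
      finally show "norm (V k) \<le> 2 powr \<gamma> * a k" using UV[of k] by linarith
    qed
    show "(\<lambda>k. 2 powr \<gamma> * a k) \<longlonglongrightarrow> 0" using tendsto_mult_right_zero[OF a0] by simp
  qed
  have X0: "XS \<longlonglongrightarrow> 0"
  proof (rule Lim_null_comparison)
    show "\<forall>\<^sub>F k in sequentially. norm (XS k) \<le> (2 * 2 powr (\<gamma> - 1)) * sqrt (a k)"
    proof (rule always_eventually, rule allI)
      fix k
      have "2 * 2 powr (\<gamma> - 1) / sqrt (real k + 4) = (2 * 2 powr (\<gamma> - 1)) * (1 / sqrt (real k + 4))" by simp
      also have "\<dots> \<le> (2 * 2 powr (\<gamma> - 1)) * sqrt (a k)" using aux_bounds(2)[of k] unfolding a_def by (intro mult_left_mono) auto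
      finally show "norm (XS k) \<le> (2 * 2 powr (\<gamma> - 1)) * sqrt (a k)" using UV[of k] by linarith
    qed
    show "(\<lambda>k. (2 * 2 powr (\<gamma> - 1)) * sqrt (a k)) \<longlonglongrightarrow> 0" using tendsto_mult_right_zero[OF b0] by simp
  qed
  have "\<forall>n. YS n \<in> sphere 0 1" using UV by simp
  then obtain l q where lq: "l \<in> sphere 0 1" "strict_mono (q :: nat \<Rightarrow> nat)" "(YS \<circ> q) \<longlonglongrightarrow> l"
    using seq_compactE[OF compact_imp_seq_compact[OF compact_sphere]] by metis
  have c1: "(U \<circ> q) \<longlonglongrightarrow> u" by (rule LIMSEQ_subseq_LIMSEQ[OF Uu lq(2)])
  have c2: "(V \<circ> q) \<longlonglongrightarrow> 0" by (rule LIMSEQ_subseq_LIMSEQ[OF V0 lq(2)])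
  have c3: "(T \<circ> q) \<longlonglongrightarrow> 0" by (rule LIMSEQ_subseq_LIMSEQ[OF T0 lq(2)])
  have c4: "(XS \<circ> q) \<longlonglongrightarrow> 0" by (rule LIMSEQ_subseq_LIMSEQ[OF X0 lq(2)])
  have c5: "\<forall>k. (T \<circ> q) k > 0" using UV by simp
  have c6: "\<forall>k. ((XS \<circ> q) k, - ((1 / ((T \<circ> q) k * norm ((U \<circ> q) k)) powr (\<gamma> - 1)) *\<^sub>R (YS \<circ> q) k))
          \<in> regular_normal_cone (gph Phi) (xb + (T \<circ> q) k *\<^sub>R (U \<circ> q) k,
             yb + (((T \<circ> q) k * norm ((U \<circ> q) k)) powr \<gamma>) *\<^sub>R (V \<circ> q) k)"
  proof
    fix k show "((XS \<circ> q) k, - ((1 / ((T \<circ> q) k * norm ((U \<circ> q) k)) powr (\<gamma> - 1)) *\<^sub>R (YS \<circ> q) k))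
          \<in> regular_normal_cone (gph Phi) (xb + (T \<circ> q) k *\<^sub>R (U \<circ> q) k,
             yb + (((T \<circ> q) k * norm ((U \<circ> q) k)) powr \<gamma>) *\<^sub>R (V \<circ> q) k)"
      using UV[of "q k"] by (simp add: powr_divide)
  qed
  have "0 \<in> pseudo_coderivative \<gamma> Phi xb yb u 0 l"
    unfolding pseudo_coderivative_def mem_Collect_eq
    by (rule exI[of _ "U \<circ> q"], rule exI[of _ "V \<circ> q"], rule exI[of _ "T \<circ> q"],
        rule exI[of _ "XS \<circ> q"], rule exI[of _ "YS \<circ> q"]) (intro conjI c1 c2 c3 c4 c5 c6 lq(3))
  then have "l \<in> ker_sv (pseudo_coderivative \<gamma> Phi xb yb u 0)" unfolding ker_sv_def by simp
  then have "l = 0" using assms(5) by blast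
  then show False using lq(1) by simp
qed

end
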